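(* Let $N=3$, $p$ a prime, and let $h_T$, $\omega_j(T)$ be as in the context. Assume the orthogonality estimate (E) and Weyl law stated in the context, with exponent $\theta$ (known: $\theta\le 7/64$). Let $i_1,i'_1,i_2,i'_2$ be non-negative integers and define $f:T/W\to\mathbb{C}$ by $$f(\mathrm{diag}(\alpha_1,\alpha_2,\alpha_3))=\Big(\sum_{i}\alpha_i\Big)^{i_1}\Big(\sum_i\overline{\alpha_i}\Big)^{i'_1}\Big(\sum_{i<k}\alpha_i\alpha_k\Big)^{i_2}\Big(\sum_{i<k}\overline{\alpha_i\alpha_k}\Big)^{i'_2}.$$ Put $P=p^{i_1+i'_1+i_2+i'_2}$. Then for every fixed $\epsilon>0$, as $T\to\infty$, $$\frac{\sum_{j=1}^\infty f(X_j(p))\,\omega_j(T)}{\sum_{j=1}^\infty\omega_j(T)}=\int_{T_0/W}f(x)\,dx+O\Big((T^2P^{1/2}+T^3P^{\theta}+P^{5/3})\,T^{-5+\epsilon}P^{\epsilon}\Big),$$ where the implied constant may depend on $\epsilon$ and on $i_1,i'_1,i_2,i'_2$.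
   Context: Let $\phi_1,\phi_2,\dots$ be a basis of Hecke–Maass cusp forms for $\mathrm{SL}(3,\mathbb{Z})$ with Fourier coefficients $A_j(m_1,m_2)$ normalized by $A_j(1,1)=1$ and spectral parameters $\nu^{(j)}=(\nu^{(j)}_1,\nu^{(j)}_2)$. $L(1,\phi_j,\mathrm{Ad})$ is the residue at $s=1$ of $L(s,\phi_j\times\tilde\phi_j)=\zeta(3s)\sum_{m_1,m_2\ge1}|A_j(m_1,m_2)|^2m_1^{-2s}m_2^{-s}$. $T$ is the diagonal torus of $\mathrm{SL}(3,\mathbb{C})$, $T_0$ the diagonal matrices with unimodular entries, $W\cong S_3$ acting by permutation; $dx$ is the Sato–Tate measure on $T_0/W$ (pushforward of normalized Haar measure of $\mathrm{SU}(3)$). $X_j(p)=\mathrm{diag}(\alpha_{p,1},\alpha_{p,2},\alpha_{p,3})\in T/W$ is the Satake parameter at $p$ of the unramified local component at $p$ of the automorphic representation of $\mathrm{PGL}(3,\mathbb{A})$ attached to $\phi_j$. Test functions: for $T\gg1$, $h_T$ is non-negative, uniformly bounded on $\{|\operatorname{Re}\nu_1|\le1/2\}\times\{|\operatorname{Re}\nu_2|\le1/2\}$, $h_T\asymp1$ on $\{c\le\operatorname{Im}\nu_1,\operatorname{Im}\nu_2\le T,\ |\operatorname{Re}\nu_1|,|\operatorname{Re}\nu_2|\le1/2\}$ for an absolute constant $c>0$, and $h_T(\nu_1,\nu_2)\ll_A((1+|\nu_1|/T)(1+|\nu_2|/T))^{-A}$ for all $A$. Weights $\omega_j(T)=h_T(\nu^{(j)})/L(1,\phi_j,\mathrm{Ad})$.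 (E) (Goldfeld–Kontorovich, Blomer): for every $\epsilon>0$ and positive integers $m_1,m_2,n_1,n_2$ with $Q=m_1m_2n_1n_2$, $\sum_jA_j(m_1,m_2)\overline{A_j(n_1,n_2)}\omega_j(T)=\delta_{m_1,n_1}\delta_{m_2,n_2}\sum_j\omega_j(T)+O_\epsilon\big((T^2Q^{1/2}+T^3Q^{\theta}+Q^{5/3})(TQ)^\epsilon\big)$, and $\sum_j\omega_j(T)\asymp T^5$. *)

theory Defs
  imports "HOL-Analysis.Analysis"
begin

text \<open>A point of T/W (diagonal torus modulo permutations) is represented by an
  ordered triple of diagonal entries; all functions below are symmetric.\<close>

definition hcomp :: "nat \<Rightarrow> complex \<times> complex \<times> complex \<Rightarrow> complex" where
  "hcomp k a = (case a of (a1, a2, a3) \<Rightarrow>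
     (\<Sum>i\<le>k. \<Sum>j\<le>k - i. a1 ^ i * a2 ^ j * a3 ^ (k - i - j)))"

text \<open>Schur polynomial s_(l1,l2,0) in three variables (l1 \<ge> l2), via Jacobi--Trudi.\<close>
definition schur2 :: "nat \<Rightarrow> nat \<Rightarrow> complex \<times> complex \<times> complex \<Rightarrow> complex" where
  "schur2 l1 l2 a = hcomp l1 a * hcomp l2 a
     - (if l2 = 0 then 0 else hcomp (l1 + 1) a * hcomp (l2 - 1) a)"

definition ffun :: "nat \<Rightarrow> nat \<Rightarrow> nat \<Rightarrow> nat \<Rightarrow> complex \<times> complex \<times> complex \<Rightarrow> complex" where
  "ffun i1 i1' i2 i2' a = (case a of (a1, a2, a3) \<Rightarrow>
      (a1 + a2 + a3) ^ i1 * (cnj a1 + cnj a2 + cnj a3) ^ i1'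
    * (a1 * a2 + a1 * a3 + a2 * a3) ^ i2
    * (cnj (a1 * a2) + cnj (a1 * a3) + cnj (a2 * a3)) ^ i2')"

text \<open>Integral against the Sato--Tate measure on T_0/W (pushforward of normalized
  Haar measure of SU(3)), written via the Weyl integration formula:
  (1/|W|) times the integral over the maximal torus with normalized Haar measure
  of F times |Vandermonde|^2.\<close>
definition sato_tate_integral :: "(complex \<times> complex \<times> complex \<Rightarrow> complex) \<Rightarrow> complex" where
  "sato_tate_integral F =
     of_real (1 / (6 * (2 * pi) ^ 2)) *
     (LBINT t1=0..2*pi. (LBINT t2=0..2*pi.
        F (cis t1, cis t2, cis (-(t1 + t2))) *
        of_real ((cmod ((cis t1 - cis t2) * (cis t1 - cis (-(t1 + t2)))
                         * (cis t2 - cis (-(t1 + t2))))) ^ 2)))"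

end

theory Submission
  imports Defs
begin


type_synonym trip = "complex \<times> complex \<times> complex"

definition e1 :: "trip \<Rightarrow> complex" where "e1 a = (case a of (x,y,z) \<Rightarrow> x+y+z)"
definition e2 :: "trip \<Rightarrow> complex" where "e2 a = (case a of (x,y,z) \<Rightarrow> x*y+x*z+y*z)"
definition e3 :: "trip \<Rightarrow> complex" where "e3 a = (case a of (x,y,z) \<Rightarrow> x*y*z)"

definition Hh :: "int \<Rightarrow> trip \<Rightarrow> complex" where
  "Hh k a = (if k < 0 then 0 else hcomp (nat k) a)"

definition G2 :: "int \<Rightarrow> complex \<Rightarrow> complex \<Rightarrow> complex" where
  "G2 k y z = (if k < 0 then 0 else (\<Sum>j\<le>nat k. y ^ j * z ^ (nat k - j)))"

definition Y1 :: "int \<Rightarrow> complex \<Rightarrow> complex" where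
  "Y1 k y = (if k < 0 then 0 else y ^ nat k)"

lemma hcomp_Suc: "hcomp (Suc k) (x,y,z) = x * hcomp k (x,y,z) + (\<Sum>j\<le>Suc k. y ^ j * z ^ (Suc k - j))"
proof -
  have "hcomp (Suc k) (x,y,z) = (\<Sum>i\<le>Suc k. \<Sum>j\<le>Suc k - i. x ^ i * y ^ j * z ^ (Suc k - i - j))"
    by (simp add: hcomp_def)
  also have "\<dots> = (\<Sum>j\<le>Suc k. y ^ j * z ^ (Suc k - j)) + (\<Sum>i\<le>k. \<Sum>j\<le>k - i. x ^ Suc i * y ^ j * z ^ (k - i - j))"
    by (subst sum.atMost_Suc_shift) simp
  also have "(\<Sum>i\<le>k. \<Sum>j\<le>k - i. x ^ Suc i * y ^ j * z ^ (k - i - j)) = x * hcomp k (x,y,z)"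
    by (simp add: hcomp_def sum_distrib_left mult.assoc)
  finally show ?thesis by simp
qed

lemma natSuc: "nat (1 + int n) = Suc n" by simp

lemma hcomp_0: "hcomp 0 a = 1"
  by (cases a) (simp add: hcomp_def)

lemma relH: "Hh k (x,y,z) - x * Hh (k-1) (x,y,z) = G2 k y z"
proof (cases "k \<ge> 1")
  case True
  then obtain n where n: "k = int (Suc n)" by (metis add.commute int_ops(2) le_iff_add nat_int of_nat_Suc zle_iff_zadd)
  show ?thesis using n by (simp add: Hh_def G2_def hcomp_Suc natSuc)
next
  case False
  then show ?thesis by (cases "k = 0") (auto simp: Hh_def G2_def hcomp_0)
qed

lemma relG: "G2 k y z - z * G2 (k-1) y z = Y1 k y"
proof (cases "k \<ge> 1")
  case True
  then obtain n where n: "k = int (Suc n)" by (metis add.commute int_ops(2) le_iff_add nat_int of_nat_Suc zle_iff_zadd)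
  have "G2 k y z = (\<Sum>j\<le>n. y ^ j * z ^ (Suc n - j)) + y ^ Suc n"
    using n by (simp add: G2_def natSuc)
  also have "(\<Sum>j\<le>n. y ^ j * z ^ (Suc n - j)) = z * (\<Sum>j\<le>n. y ^ j * z ^ (n - j))"
    by (simp add: sum_distrib_left Suc_diff_le mult.left_commute)
  finally show ?thesis using n by (simp add: G2_def Y1_def natSuc)
next
  case False
  then show ?thesis by (cases "k = 0") (auto simp: Y1_def G2_def)
qed

lemma relY: "k \<noteq> 0 \<Longrightarrow> Y1 k y - y * Y1 (k-1) y = 0"
proof (cases "k \<ge> 1")
  case True
  then obtain n where n: "k = int (Suc n)" by (metis add.commute int_ops(2) le_iff_add nat_int of_nat_Suc zle_iff_zadd)
  then show ?thesis by (simp add: Y1_def natSuc)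
qed (auto simp: Y1_def)

lemma alg_rec:
  fixes H0 H1 H2 H3 G0 G1 G2' Y0 Y1' x y z :: complex
  shows "H0 - x*H1 = G0 \<Longrightarrow> H1 - x*H2 = G1 \<Longrightarrow> H2 - x*H3 = G2' \<Longrightarrow> G0 - z*G1 = Y0
   \<Longrightarrow> G1 - z*G2' = Y1' \<Longrightarrow> Y0 - y*Y1' = 0 \<Longrightarrow> H0 = (x+y+z)*H1 - (x*y+x*z+y*z)*H2 + x*y*z*H3"
proof -
  assume a: "H0 - x*H1 = G0" "H1 - x*H2 = G1" "H2 - x*H3 = G2'" "G0 - z*G1 = Y0" "G1 - z*G2' = Y1'" "Y0 - y*Y1' = 0"
  have "(H0 - x*H1) - z*(H1 - x*H2) - y*((H1 - x*H2) - z*(H2 - x*H3)) = 0"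
    using a by simp
  moreover have "H0 - ((x+y+z)*H1 - (x*y+x*z+y*z)*H2 + x*y*z*H3) = (H0 - x*H1) - z*(H1 - x*H2) - y*((H1 - x*H2) - z*(H2 - x*H3))"
    by (simp add: algebra_simps)
  ultimately show ?thesis by simp
qed

lemma Hh_rec:
  assumes "k \<ge> 1"
  shows "Hh k a = e1 a * Hh (k-1) a - e2 a * Hh (k-2) a + e3 a * Hh (k-3) a"
proof -
  obtain x y z where a: "a = (x,y,z)" by (cases a) auto
  have h0: "Hh k a - x * Hh (k-1) a = G2 k y z" using relH a by simp
  have h1: "Hh (k-1) a - x * Hh (k-2) a = G2 (k-1) y z" using relH[of "k-1"] a by (simp add: algebra_simps)
  have h2: "Hh (k-2) a - x * Hh (k-3) a = G2 (k-2) y z" using relH[of "k-2"] a by (simp add: algebra_simps)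
  have g0: "G2 k y z - z * G2 (k-1) y z = Y1 k y" using relG by simp
  have g1: "G2 (k-1) y z - z * G2 (k-2) y z = Y1 (k-1) y" using relG[of "k-1"] by (simp add: algebra_simps)
  have y0: "Y1 k y - y * Y1 (k-1) y = 0" using relY assms by simp
  show ?thesis unfolding e1_def e2_def e3_def a prod.case
    by (rule alg_rec[OF h0[unfolded a] h1[unfolded a] h2[unfolded a] g0 g1 y0])
qed


definition Sx :: "int \<Rightarrow> int \<Rightarrow> trip \<Rightarrow> complex" where
  "Sx a b t = Hh a t * Hh b t - Hh (a+1) t * Hh (b-1) t"

lemma Hh_neg: "k < 0 \<Longrightarrow> Hh k t = 0" by (simp add: Hh_def)

lemma schur2_Sx: "schur2 a b t = Sx (int a) (int b) t"
proof (cases "b = 0")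
  case True then show ?thesis by (simp add: schur2_def Sx_def Hh_def hcomp_0)
next
  case False
  then have "nat (int b - 1) = b - 1" "nat (int a + 1) = a + 1" by auto
  with False show ?thesis by (simp add: schur2_def Sx_def Hh_def)
qed

lemma P1_int:
  assumes "b \<ge> 0" "a \<ge> -1" "e3 t = 1"
  shows "e1 t * Sx a b t = Sx (a+1) b t + Sx a (b+1) t + Sx (a-1) (b-1) t"
proof -
  have r1: "Hh (b+1) t = e1 t * Hh b t - e2 t * Hh (b-1) t + Hh (b-2) t"
    using Hh_rec[of "b+1" t] assms by simp
  have ee: "a+2-1 = a+1" "a+2-2 = a" "a+2-3 = a-1" by simp_all
  have r2: "Hh (a+2) t = e1 t * Hh (a+1) t - e2 t * Hh a t + Hh (a-1) t"
    using Hh_rec[of "a+2" t, unfolded ee] assms by simp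
  have r1': "Hh (b+1) t = e1 t * Hh b t - e2 t * Hh (b-1) t + Hh (b-2) t"
    using r1 .
  have e: "a + 1 + 1 = a + 2" "a - 1 + 1 = a" "b - 1 - 1 = b - 2" "b + 1 - 1 = b" by simp_all
  show ?thesis unfolding Sx_def e r1' r2 by algebra
qed

lemma P2_int:
  assumes "b \<ge> 0" "a \<ge> -1" "e3 t = 1"
  shows "e2 t * Sx a b t = Sx (a+1) (b+1) t + Sx a (b-1) t + Sx (a-1) b t"
proof -
  have r1: "Hh (b+1) t = e1 t * Hh b t - e2 t * Hh (b-1) t + Hh (b-2) t"
    using Hh_rec[of "b+1" t] assms by simp
  have ee: "a+2-1 = a+1" "a+2-2 = a" "a+2-3 = a-1" by simp_all
  have r2: "Hh (a+2) t = e1 t * Hh (a+1) t - e2 t * Hh a t + Hh (a-1) t"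
    using Hh_rec[of "a+2" t, unfolded ee] assms by simp
  have r1': "Hh (b+1) t = e1 t * Hh b t - e2 t * Hh (b-1) t + Hh (b-2) t"
    using r1 .
  have e: "a + 1 + 1 = a + 2" "a - 1 + 1 = a" "b - 1 - 1 = b - 2" "b + 1 - 1 = b" by simp_all
  show ?thesis unfolding Sx_def e r1' r2 by algebra
qed

lemma P1_nat:
  assumes "b \<le> a" "e3 t = 1"
  shows "e1 t * schur2 a b t = schur2 (a+1) b t + (if b < a then schur2 a (b+1) t else 0)
     + (if 1 \<le> b then schur2 (a-1) (b-1) t else 0)"
proof -
  have "e1 t * schur2 a b t = Sx (int a + 1) (int b) t + Sx (int a) (int b + 1) t + Sx (int a - 1) (int b - 1) t"
    using P1_int[of "int b" "int a" t] assms by (simp add: schur2_Sx)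
  moreover have "Sx (int a) (int b + 1) t = (if b < a then schur2 a (b+1) t else 0)"
    using assms by (auto simp: schur2_Sx Sx_def add.commute)
  moreover have "Sx (int a - 1) (int b - 1) t = (if 1 \<le> b then schur2 (a-1) (b-1) t else 0)"
    using assms by (auto simp: schur2_Sx Sx_def Hh_neg of_nat_diff)
  moreover have "Sx (int a + 1) (int b) t = schur2 (a+1) b t" by (simp add: schur2_Sx add.commute)
  ultimately show ?thesis by simp
qed

lemma P2_nat:
  assumes "b \<le> a" "e3 t = 1"
  shows "e2 t * schur2 a b t = schur2 (a+1) (b+1) t + (if 1 \<le> b then schur2 a (b-1) t else 0)
     + (if b < a then schur2 (a-1) b t else 0)"
proof -
  have "e2 t * schur2 a b t = Sx (int a + 1) (int b + 1) t + Sx (int a) (int b - 1) t + Sx (int a - 1) (int b) t"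
    using P2_int[of "int b" "int a" t] assms by (simp add: schur2_Sx)
  moreover have "Sx (int a) (int b - 1) t = (if 1 \<le> b then schur2 a (b-1) t else 0)"
    using assms by (auto simp: schur2_Sx Sx_def Hh_neg of_nat_diff)
  moreover have "Sx (int a - 1) (int b) t = (if b < a then schur2 (a-1) b t else 0)"
    using assms by (auto simp: schur2_Sx Sx_def of_nat_diff)
  moreover have "Sx (int a + 1) (int b + 1) t = schur2 (a+1) (b+1) t" by (simp add: schur2_Sx add.commute)
  ultimately show ?thesis by simp
qed



definition Dm :: "nat \<Rightarrow> (nat \<times> nat) set" where
  "Dm m = {ab. snd ab \<le> fst ab \<and> fst ab \<le> m}"

lemma finite_Dm: "finite (Dm m)"
  by (rule finite_subset[of _ "{..m} \<times> {..m}"]) (auto simp: Dm_def)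

definition Sp :: "nat \<Rightarrow> (trip \<Rightarrow> complex) \<Rightarrow> bool" where
  "Sp m F \<longleftrightarrow> (\<exists>c. \<forall>t. e3 t = 1 \<longrightarrow> F t = (\<Sum>ab\<in>Dm m. c ab * schur2 (fst ab) (snd ab) t))"

lemma Sp_cong: "(\<And>t. e3 t = 1 \<Longrightarrow> F t = G t) \<Longrightarrow> Sp m G \<Longrightarrow> Sp m F"
  unfolding Sp_def by metis

lemma Sp_zero: "Sp m (\<lambda>t. 0)"
  unfolding Sp_def by (rule exI[of _ "\<lambda>_. 0"]) simp

lemma Sp_add: "Sp m F \<Longrightarrow> Sp m G \<Longrightarrow> Sp m (\<lambda>t. F t + G t)"
  unfolding Sp_def
proof (elim exE)
  fix c d assume c: "\<forall>t. e3 t = 1 \<longrightarrow> F t = (\<Sum>ab\<in>Dm m. c ab * schur2 (fst ab) (snd ab) t)"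
    and d: "\<forall>t. e3 t = 1 \<longrightarrow> G t = (\<Sum>ab\<in>Dm m. d ab * schur2 (fst ab) (snd ab) t)"
  show "\<exists>c. \<forall>t. e3 t = 1 \<longrightarrow> F t + G t = (\<Sum>ab\<in>Dm m. c ab * schur2 (fst ab) (snd ab) t)"
    by (rule exI[of _ "\<lambda>ab. c ab + d ab"]) (simp add: c d distrib_right sum.distrib)
qed

lemma Sp_cmult: "Sp m F \<Longrightarrow> Sp m (\<lambda>t. k * F t)"
  unfolding Sp_def
proof (elim exE)
  fix c assume c: "\<forall>t. e3 t = 1 \<longrightarrow> F t = (\<Sum>ab\<in>Dm m. c ab * schur2 (fst ab) (snd ab) t)"
  show "\<exists>c. \<forall>t. e3 t = 1 \<longrightarrow> k * F t = (\<Sum>ab\<in>Dm m. c ab * schur2 (fst ab) (snd ab) t)"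
    by (rule exI[of _ "\<lambda>ab. k * c ab"]) (simp add: c sum_distrib_left mult.assoc)
qed

lemma Sp_sum: "finite I \<Longrightarrow> (\<And>i. i \<in> I \<Longrightarrow> Sp m (F i)) \<Longrightarrow> Sp m (\<lambda>t. \<Sum>i\<in>I. F i t)"
proof (induction I rule: finite_induct)
  case empty then show ?case using Sp_zero by simp
next
  case (insert x I)
  then show ?case using Sp_add[of m "F x" "\<lambda>t. \<Sum>i\<in>I. F i t"] by simp
qed

lemma Sp_schur: "b \<le> a \<Longrightarrow> a \<le> m \<Longrightarrow> Sp m (schur2 a b)"
  unfolding Sp_def
proof (rule exI[of _ "\<lambda>ab. if ab = (a,b) then 1 else 0"], intro allI impI)
  fix t assume "b \<le> a" "a \<le> m"
  then have "(a,b) \<in> Dm m" by (simp add: Dm_def)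
  then show "schur2 a b t = (\<Sum>ab\<in>Dm m. (if ab = (a, b) then 1 else 0) * schur2 (fst ab) (snd ab) t)"
  proof -
    have "(\<Sum>ab\<in>Dm m. (if ab = (a, b) then 1 else 0) * schur2 (fst ab) (snd ab) t)
       = (\<Sum>ab\<in>Dm m. (if ab = (a, b) then schur2 a b t else 0))"
      by (rule sum.cong) auto
    also have "\<dots> = schur2 a b t" using finite_Dm \<open>(a,b) \<in> Dm m\<close> by (simp add: sum.delta')
    finally show ?thesis by simp
  qed
qed

lemma Sp_if: "(P \<Longrightarrow> Sp m F) \<Longrightarrow> Sp m (\<lambda>t. if P then F t else 0)"
  using Sp_zero by (cases P) auto

lemma Sp_e1_schur: "b \<le> a \<Longrightarrow> a \<le> m \<Longrightarrow> Sp (Suc m) (\<lambda>t. e1 t * schur2 a b t)"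
  apply (rule Sp_cong[OF P1_nat], assumption, assumption)
  apply (intro Sp_add Sp_if Sp_schur)
  by auto

lemma Sp_e2_schur: "b \<le> a \<Longrightarrow> a \<le> m \<Longrightarrow> Sp (Suc m) (\<lambda>t. e2 t * schur2 a b t)"
  apply (rule Sp_cong[OF P2_nat], assumption, assumption)
  apply (intro Sp_add Sp_if Sp_schur)
  by auto

lemma Sp_e1: "Sp m F \<Longrightarrow> Sp (Suc m) (\<lambda>t. e1 t * F t)"
proof -
  assume "Sp m F"
  then obtain c where c: "\<And>t. e3 t = 1 \<Longrightarrow> F t = (\<Sum>ab\<in>Dm m. c ab * schur2 (fst ab) (snd ab) t)"
    unfolding Sp_def by blast
  show ?thesis
  proof (rule Sp_cong)
    fix t assume "e3 t = 1"
    then show "e1 t * F t = (\<Sum>ab\<in>Dm m. c ab * (e1 t * schur2 (fst ab) (snd ab) t))"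
      by (simp add: c sum_distrib_left mult.left_commute)
  next
    show "Sp (Suc m) (\<lambda>t. \<Sum>ab\<in>Dm m. c ab * (e1 t * schur2 (fst ab) (snd ab) t))"
      by (intro Sp_sum finite_Dm Sp_cmult Sp_e1_schur) (auto simp: Dm_def)
  qed
qed

lemma Sp_e2: "Sp m F \<Longrightarrow> Sp (Suc m) (\<lambda>t. e2 t * F t)"
proof -
  assume "Sp m F"
  then obtain c where c: "\<And>t. e3 t = 1 \<Longrightarrow> F t = (\<Sum>ab\<in>Dm m. c ab * schur2 (fst ab) (snd ab) t)"
    unfolding Sp_def by blast
  show ?thesis
  proof (rule Sp_cong)
    fix t assume "e3 t = 1"
    then show "e2 t * F t = (\<Sum>ab\<in>Dm m. c ab * (e2 t * schur2 (fst ab) (snd ab) t))"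
      by (simp add: c sum_distrib_left mult.left_commute)
  next
    show "Sp (Suc m) (\<lambda>t. \<Sum>ab\<in>Dm m. c ab * (e2 t * schur2 (fst ab) (snd ab) t))"
      by (intro Sp_sum finite_Dm Sp_cmult Sp_e2_schur) (auto simp: Dm_def)
  qed
qed

lemma Sp_pow: "Sp (i + k) (\<lambda>t. e1 t ^ i * e2 t ^ k)"
proof (induction i)
  case 0
  show ?case
  proof (induction k)
    case 0
    have "Sp 0 (schur2 0 0)" by (rule Sp_schur) auto
    then have "Sp 0 (\<lambda>t. 1)" by (rule Sp_cong[rotated]) (simp add: schur2_def hcomp_0)
    then show ?case by simp
  next
    case (Suc k)
    then show ?case using Sp_e2[OF Suc] by (simp add: mult.assoc)
  qed
next
  case (Suc i)
  then show ?case using Sp_e1[OF Suc] by (simp add: mult.assoc)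
qed



definition pm :: "nat \<Rightarrow> 'a \<times> 'a \<times> 'a \<Rightarrow> 'a \<times> 'a \<times> 'a" where
  "pm i e = (case e of (p,q,r) \<Rightarrow> if i = 0 then (p,q,r) else if i = 1 then (p,r,q) else if i = 2 then (q,p,r)
     else if i = 3 then (q,r,p) else if i = 4 then (r,p,q) else (r,q,p))"

definition sg :: "nat \<Rightarrow> 'a::ring_1" where
  "sg i = (if i = 0 \<or> i = 3 \<or> i = 4 then 1 else -1)"

definition mon :: "nat \<times> nat \<times> nat \<Rightarrow> trip \<Rightarrow> complex" where
  "mon e t = (case e of (p,q,r) \<Rightarrow> case t of (x,y,z) \<Rightarrow> x^p * y^q * z^r)"

definition alt :: "nat \<times> nat \<times> nat \<Rightarrow> trip \<Rightarrow> complex" where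
  "alt e t = (\<Sum>i<6. sg i * mon (pm i e) t)"

definition Dl :: "trip \<Rightarrow> complex" where
  "Dl t = (case t of (x,y,z) \<Rightarrow> (x-y)*(x-z)*(y-z))"

lemma alt_expl: "alt (p,q,r) (x,y,z) = x^p*y^q*z^r - x^p*y^r*z^q - x^q*y^p*z^r + x^q*y^r*z^p + x^r*y^p*z^q - x^r*y^q*z^p"
  by (simp add: alt_def pm_def sg_def mon_def numeral_eq_Suc)

lemma altP1: "e1 t * alt (p,q,r) t = alt (p+1,q,r) t + alt (p,q+1,r) t + alt (p,q,r+1) t"
  by (cases t) (simp add: alt_expl e1_def algebra_simps)

lemma altP2: "e2 t * alt (p,q,r) t = alt (p+1,q+1,r) t + alt (p+1,q,r+1) t + alt (p,q+1,r+1) t"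
  by (cases t) (simp add: alt_expl e2_def algebra_simps)

lemma alt3: "e3 t = 1 \<Longrightarrow> alt (p+1,q+1,r+1) t = alt (p,q,r) t"
proof -
  assume "e3 t = 1"
  obtain x y z where t: "t = (x,y,z)" by (cases t) auto
  have "alt (p+1,q+1,r+1) t = e3 t * alt (p,q,r) t"
    by (simp add: t alt_expl e3_def algebra_simps)
  then show ?thesis using \<open>e3 t = 1\<close> by simp
qed

lemma alt_eq12: "alt (p,p,r) t = 0"
  by (cases t) (simp add: alt_expl algebra_simps)

lemma alt_eq23: "alt (p,q,q) t = 0"
  by (cases t) (simp add: alt_expl algebra_simps)

lemma Dl_alt: "Dl t = alt (2,1,0) t"
  by (cases t) (simp add: alt_expl Dl_def algebra_simps power2_eq_square)

lemma bialt:
  assumes "e3 t = 1"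
  shows "b \<le> a \<Longrightarrow> Dl t * schur2 a b t = alt (a+2,b+1,0) t"
proof (induction "(a+b)^2 + (a-b)" arbitrary: a b rule: less_induct)
  case less
  show ?case
  proof (cases "b < a")
    case True
    then obtain a' where a': "a = Suc a'" by (cases a) auto
    have ih1: "Dl t * schur2 a' b t = alt (a'+2,b+1,0) t"
      using True a' by (intro less(1)) (auto simp: power2_eq_square)
    have ih2: "b < a' \<Longrightarrow> Dl t * schur2 a' (b+1) t = alt (a'+2,b+2,0) t"
      using True a' less(1)[of a' "b+1"] by (auto simp: power2_eq_square)
    have ih3: "1 \<le> b \<Longrightarrow> Dl t * schur2 (a'-1) (b-1) t = alt (a'+1,b,0) t"
    proof -
      assume b1: "1 \<le> b"
      then obtain b' where b': "b = Suc b'" by (cases b) auto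
      obtain a'' where a'': "a' = Suc a''" using True a' b' by (cases a') auto
      have "Dl t * schur2 a'' b' t = alt (a''+2,b'+1,0) t"
        using True a' b' a'' less(1)[of a'' b'] by (auto simp: power2_eq_square)
      then show ?thesis using b' a'' by (simp add: numeral_eq_Suc)
    qed
    have P: "e1 t * schur2 a' b t = schur2 a b t + (if b < a' then schur2 a' (b+1) t else 0)
      + (if 1 \<le> b then schur2 (a'-1) (b-1) t else 0)"
      using P1_nat[of b a' t] True a' assms by simp
    have A: "e1 t * alt (a'+2,b+1,0) t = alt (a+2,b+1,0) t + alt (a'+2,b+2,0) t + alt (a'+1,b,0) t"
    proof -
      have "e1 t * alt (a'+2,b+1,0) t = alt (a'+3,b+1,0) t + alt (a'+2,b+2,0) t + alt (a'+2,b+1,0+1) t"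
        using altP1[of t "a'+2" "b+1" 0] by (simp add: numeral_eq_Suc)
      moreover have "alt (a'+2,b+1,0+1) t = alt (a'+1,b,0) t"
      proof (cases b)
        case 0 then show ?thesis using alt_eq23[of "a'+2" 1 t] alt_eq23[of "a'+1" 0 t] by simp
      next
        case (Suc b')
        have "alt (a'+1+1,b'+1+1,0+1) t = alt (a'+1,b'+1,0) t" by (rule alt3[OF assms])
        then show ?thesis using Suc by (simp add: numeral_eq_Suc)
      qed
      ultimately show ?thesis using a' by (simp add: numeral_eq_Suc)
    qed
    have A2: "alt (a'+2,b+2,0) t = (if b < a' then Dl t * schur2 a' (b+1) t else 0)"
    proof (cases "b < a'")
      case False
      then have "b + 2 = a' + 2" using True a' by simp
      then show ?thesis using False alt_eq12[of "a'+2" 0 t] by simp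
    qed (use ih2 in simp)
    have A3: "alt (a'+1,b,0) t = (if 1 \<le> b then Dl t * schur2 (a'-1) (b-1) t else 0)"
      using ih3 alt_eq23[of "a'+1" 0 t] by (cases b) auto
    have Q: "e1 t * (Dl t * schur2 a' b t) = Dl t * schur2 a b t
       + (if b < a' then Dl t * schur2 a' (b+1) t else 0) + (if 1 \<le> b then Dl t * schur2 (a'-1) (b-1) t else 0)"
      by (simp only: mult.left_commute[of "e1 t" "Dl t"] P distrib_left if_distrib[of "(*) (Dl t)"] mult_zero_right)
    have "Dl t * schur2 a b t = e1 t * (Dl t * schur2 a' b t)
       - (if b < a' then Dl t * schur2 a' (b+1) t else 0) - (if 1 \<le> b then Dl t * schur2 (a'-1) (b-1) t else 0)"
      by (simp only: Q) simp
    also have "\<dots> = alt (a+2,b+1,0) t" using ih1 A A2 A3 by simp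
    finally show ?thesis .
  next
    case False
    then have ab: "a = b" using less(2) by simp
    show ?thesis
    proof (cases a)
      case 0 then show ?thesis using ab by (simp add: schur2_def hcomp_0 Dl_alt numeral_eq_Suc)
    next
      case (Suc a')
      have ih1: "Dl t * schur2 a' a' t = alt (a'+2,a'+1,0) t"
        using ab Suc less(1)[of a' a'] by (auto simp: power2_eq_square)
      have ih2: "1 \<le> a' \<Longrightarrow> Dl t * schur2 a' (a'-1) t = alt (a'+2,a',0) t"
      proof -
        assume "1 \<le> a'"
        have m: "(a' + a' - 1) * (a' + a' - 1) \<le> (a' + a') * (a' + a')" by (intro mult_le_mono) auto
        show ?thesis using ab Suc \<open>1 \<le> a'\<close> m less(1)[of a' "a'-1"] by (auto simp: power2_eq_square)
      qed
      have P: "e2 t * schur2 a' a' t = schur2 a a t + (if 1 \<le> a' then schur2 a' (a'-1) t else 0)"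
        using P2_nat[of a' a' t] assms Suc by simp
      have A: "e2 t * alt (a'+2,a'+1,0) t = alt (a+2,a+1,0) t + alt (a'+2,a',0) t"
      proof -
        have "e2 t * alt (a'+2,a'+1,0) t = alt (a'+3,a'+2,0) t + alt (a'+3,a'+1,0+1) t + alt (a'+2,a'+2,0+1) t"
          using altP2[of t "a'+2" "a'+1" 0] by (simp add: numeral_eq_Suc)
        moreover have "alt (a'+2,a'+2,0+1) t = 0" by (rule alt_eq12)
        moreover have "alt (a'+3,a'+1,0+1) t = alt (a'+2,a',0) t"
          using alt3[OF assms, of "a'+2" a' 0] by (simp add: numeral_eq_Suc)
        ultimately show ?thesis using Suc by (simp add: numeral_eq_Suc)
      qed
      have A2: "alt (a'+2,a',0) t = (if 1 \<le> a' then Dl t * schur2 a' (a'-1) t else 0)"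
        using ih2 alt_eq23[of "a'+2" 0 t] by (cases a') auto
      have Q: "e2 t * (Dl t * schur2 a' a' t) = Dl t * schur2 a a t
         + (if 1 \<le> a' then Dl t * schur2 a' (a'-1) t else 0)"
        by (simp only: mult.left_commute[of "e2 t" "Dl t"] P distrib_left if_distrib[of "(*) (Dl t)"] mult_zero_right)
      have "Dl t * schur2 a a t = e2 t * (Dl t * schur2 a' a' t)
         - (if 1 \<le> a' then Dl t * schur2 a' (a'-1) t else 0)"
        by (simp only: Q) simp
      also have "\<dots> = alt (a+2,b+1,0) t" using ih1 A A2 ab by simp
      finally show ?thesis using ab by simp
    qed
  qed
qed



lemma int_cis: fixes n :: int
  shows "(LBINT t=0..2*pi. cis (of_int n * t)) = (if n = 0 then 2*pi else 0)"
proof (cases "n = 0")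
  case True
  have "(LBINT t=0..2*pi. cis (of_int n * t)) = (LBINT t=0..2*pi. complex_of_real 1)"
    using True by simp
  also have "\<dots> = of_real (LBINT t=0..2*pi. (1::real))"
    by (rule interval_lebesgue_integral_of_real)
  also have "(LBINT t=0..2*pi. (1::real)) = 2*pi"
    using interval_integral_const(2)[of 1 0 "2*pi"] by (simp add: zero_ereal_def)
  finally show ?thesis using True by simp
next
  case False
  let ?F = "\<lambda>t::real. exp (\<i> * of_int n * of_real t) / (\<i> * of_int n)"
  have "(LBINT t=ereal 0..2*pi. cis (of_int n * t)) = ?F (2*pi) - ?F 0"
  proof (rule interval_integral_FTC_finite)
    show "continuous_on {min 0 (2 * pi)..max 0 (2 * pi)} (\<lambda>t. cis (real_of_int n * t))"
      by (intro continuous_intros)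
    fix x :: real
    have "((\<lambda>z. exp (\<i> * of_int n * z) / (\<i> * of_int n)) has_field_derivative cis (of_int n * x)) (at (of_real x))"
      using False by (auto intro!: derivative_eq_intros simp: cis_conv_exp field_simps)
    then show "(?F has_vector_derivative cis (of_int n * x)) (at x within {min 0 (2 * pi)..max 0 (2 * pi)})"
      by (rule has_vector_derivative_real_field)
  qed
  also have "?F (2*pi) = ?F 0"
  proof -
    have "exp (\<i> * of_int n * of_real (2*pi)) = 1"
      using exp_integer_2pi[of "of_int n"] by (simp add: mult.commute mult.left_commute)
    then show ?thesis by simp
  qed
  finally show ?thesis using False by (simp add: zero_ereal_def)
qed

lemma cis_integrable: "interval_lebesgue_integrable lborel 0 (2*pi) (\<lambda>t. c * cis (a * t + b))"
proof -
  have "continuous_on {0..2*pi} (\<lambda>t. c * cis (a * t + b))"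
    unfolding cis_conv_exp by (intro continuous_intros)
  then show ?thesis
    using interval_integrable_continuous_on[of 0 "2*pi" "\<lambda>t. c * cis (a * t + b)"]
    by (simp add: zero_ereal_def)
qed

lemma lbint_sum:
  "finite K \<Longrightarrow> (\<And>k. k \<in> K \<Longrightarrow> interval_lebesgue_integrable lborel a b (f k)) \<Longrightarrow>
   interval_lebesgue_integrable lborel a b (\<lambda>t. \<Sum>k\<in>K. f k t) \<and>
   (LBINT t=a..b. (\<Sum>k\<in>K. f k t)) = (\<Sum>k\<in>K. LBINT t=a..b. f k t)"
proof (induction K rule: finite_induct)
  case empty
  have "interval_lebesgue_integrable lborel a b (\<lambda>t. 0::'b)"
    by (simp add: interval_lebesgue_integrable_def set_integrable_def)
  then show ?case by simp
next
  case (insert x F)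
  then have i1: "interval_lebesgue_integrable lborel a b (f x)" by simp
  from insert have ih: "interval_lebesgue_integrable lborel a b (\<lambda>t. \<Sum>k\<in>F. f k t)"
    "(LBINT t=a..b. (\<Sum>k\<in>F. f k t)) = (\<Sum>k\<in>F. LBINT t=a..b. f k t)" by auto
  show ?case using insert(1,2) interval_lebesgue_integral_add[OF i1 ih(1)] ih(2) by simp
qed

lemma dbl_int:
  fixes u v :: "'k \<Rightarrow> int" and w :: "'k \<Rightarrow> complex"
  assumes "finite K"
  shows "(LBINT t1=0..2*pi. (LBINT t2=0..2*pi. (\<Sum>k\<in>K. w k * cis (of_int (u k) * t1 + of_int (v k) * t2))))
     = (2*pi)^2 * (\<Sum>k\<in>K. w k * (if u k = 0 \<and> v k = 0 then 1 else 0))"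
proof -
  have inner: "(LBINT t2=0..2*pi. (\<Sum>k\<in>K. w k * cis (of_int (u k) * t1 + of_int (v k) * t2)))
     = (\<Sum>k\<in>K. (w k * (if v k = 0 then 2*pi else 0)) * cis (of_int (u k) * t1))" for t1
  proof -
    have "(LBINT t2=0..2*pi. (\<Sum>k\<in>K. w k * cis (of_int (u k) * t1 + of_int (v k) * t2)))
       = (\<Sum>k\<in>K. LBINT t2=0..2*pi. w k * cis (of_int (u k) * t1 + of_int (v k) * t2))"
      using lbint_sum[OF assms, of 0 "2*pi" "\<lambda>k t2. w k * cis (of_int (u k) * t1 + of_int (v k) * t2)"]
        cis_integrable[of "w _" "of_int (v _)" "of_int (u _) * t1"] by (simp add: add.commute)
    also have "\<dots> = (\<Sum>k\<in>K. (w k * (if v k = 0 then 2*pi else 0)) * cis (of_int (u k) * t1))"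
    proof (rule sum.cong[OF refl])
      fix k
      have "(\<lambda>t2. w k * cis (of_int (u k) * t1 + of_int (v k) * t2)) = (\<lambda>t2. (w k * cis (of_int (u k) * t1)) * cis (of_int (v k) * t2))"
        by (simp add: cis_mult[symmetric] mult.assoc)
      then show "(LBINT t2=0..2*pi. w k * cis (of_int (u k) * t1 + of_int (v k) * t2)) = (w k * (if v k = 0 then 2*pi else 0)) * cis (of_int (u k) * t1)"
        by (simp add: int_cis)
    qed
    finally show ?thesis .
  qed
  have "(LBINT t1=0..2*pi. (LBINT t2=0..2*pi. (\<Sum>k\<in>K. w k * cis (of_int (u k) * t1 + of_int (v k) * t2))))
     = (LBINT t1=0..2*pi. (\<Sum>k\<in>K. (w k * (if v k = 0 then 2*pi else 0)) * cis (of_int (u k) * t1)))"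
    by (simp only: inner)
  also have "\<dots> = (\<Sum>k\<in>K. LBINT t1=0..2*pi. (w k * (if v k = 0 then 2*pi else 0)) * cis (of_int (u k) * t1))"
    using lbint_sum[OF assms, of 0 "2*pi" "\<lambda>k t1. (w k * (if v k = 0 then 2*pi else 0)) * cis (of_int (u k) * t1)"]
      cis_integrable[of "_" "of_int (u _)" 0] by simp
  also have "\<dots> = (\<Sum>k\<in>K. (w k * (if v k = 0 then 2*pi else 0)) * (if u k = 0 then 2*pi else 0))"
    by (simp add: int_cis)
  also have "\<dots> = (2*pi)^2 * (\<Sum>k\<in>K. w k * (if u k = 0 \<and> v k = 0 then 1 else 0))"
    by (auto simp: sum_distrib_left power2_eq_square intro!: sum.cong)
  finally show ?thesis .
qed



definition UU :: "nat \<times> nat \<times> nat \<Rightarrow> int" where "UU e = (case e of (p,q,r) \<Rightarrow> int p - int r)"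
definition VV :: "nat \<times> nat \<times> nat \<Rightarrow> int" where "VV e = (case e of (p,q,r) \<Rightarrow> int q - int r)"

definition tor :: "real \<Rightarrow> real \<Rightarrow> trip" where "tor t1 t2 = (cis t1, cis t2, cis (-(t1+t2)))"

lemma e3_tor: "e3 (tor t1 t2) = 1"
  by (simp add: e3_def tor_def cis_mult)

lemma mon_tor: "mon e (tor t1 t2) = cis (of_int (UU e) * t1 + of_int (VV e) * t2)"
proof -
  obtain p q r where e: "e = (p,q,r)" by (cases e) auto
  have "mon e (tor t1 t2) = cis (real p * t1) * cis (real q * t2) * cis (real r * (-(t1+t2)))"
    by (simp add: e mon_def tor_def Complex.DeMoivre)
  also have "\<dots> = cis (real p * t1 + real q * t2 + real r * (-(t1+t2)))"
    by (simp add: cis_mult)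
  also have "real p * t1 + real q * t2 + real r * (-(t1+t2)) = of_int (UU e) * t1 + of_int (VV e) * t2"
    by (simp add: e UU_def VV_def algebra_simps)
  finally show ?thesis .
qed

lemma sg_real: "cnj (sg i :: complex) = sg i"
  by (simp add: sg_def)

lemma cis_gen: "(s * cis A) * (s2 * cis (- B)) = (s * s2) * cis (A - B)"
proof -
  have "cis (A - B) = cis A * cis (- B)" by (simp add: cis_mult)
  then show ?thesis by simp
qed

lemma alt_prod_tor:
  "alt e (tor t1 t2) * cnj (alt e' (tor t1 t2)) =
   (\<Sum>ii\<in>{..<6} \<times> {..<6}. (sg (fst ii) * sg (snd ii)) *
       cis (of_int (UU (pm (fst ii) e) - UU (pm (snd ii) e')) * t1 + of_int (VV (pm (fst ii) e) - VV (pm (snd ii) e')) * t2))"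
proof -
  have "alt e (tor t1 t2) * cnj (alt e' (tor t1 t2)) =
    (\<Sum>i<6. \<Sum>i'<6. (sg i * cis (of_int (UU (pm i e)) * t1 + of_int (VV (pm i e)) * t2)) *
        (sg i' * cis (- (of_int (UU (pm i' e')) * t1 + of_int (VV (pm i' e')) * t2))))"
    by (simp add: alt_def mon_tor cnj_sum sg_real cis_cnj sum_product)
  also have "\<dots> = (\<Sum>i<6. \<Sum>i'<6. (sg i * sg i') *
       cis (of_int (UU (pm i e) - UU (pm i' e')) * t1 + of_int (VV (pm i e) - VV (pm i' e')) * t2))"
    by (intro sum.cong refl, subst cis_gen) (simp add: algebra_simps)
  also have "\<dots> = (\<Sum>ii\<in>{..<6} \<times> {..<6}. (sg (fst ii) * sg (snd ii)) *
       cis (of_int (UU (pm (fst ii) e) - UU (pm (snd ii) e')) * t1 + of_int (VV (pm (fst ii) e) - VV (pm (snd ii) e')) * t2))"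
    by (simp add: sum.cartesian_product case_prod_beta)
  finally show ?thesis .
qed

lemma six_cases: "(i::nat) < 6 \<Longrightarrow> i = 0 \<or> i = 1 \<or> i = 2 \<or> i = 3 \<or> i = 4 \<or> i = 5"
  by auto

lemma cond_iff:
  assumes "i < 6" "i' < 6" "b \<le> a" "b' \<le> a'"
  shows "(UU (pm i (a+2,b+1,0)) - UU (pm i' (a'+2,b'+1,0)) = 0 \<and> VV (pm i (a+2,b+1,0)) - VV (pm i' (a'+2,b'+1,0)) = 0)
     \<longleftrightarrow> (i = i' \<and> a = a' \<and> b = b')"
  using six_cases[OF assms(1)] six_cases[OF assms(2)] assms(3,4)
  by (auto simp: UU_def VV_def pm_def)

lemma comb:
  assumes "b \<le> a" "b' \<le> a'"
  shows "(\<Sum>ii\<in>{..<6::nat} \<times> {..<6::nat}. (sg (fst ii) * sg (snd ii)) *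
     (if UU (pm (fst ii) (a+2,b+1,0)) - UU (pm (snd ii) (a'+2,b'+1,0)) = 0 \<and>
         VV (pm (fst ii) (a+2,b+1,0)) - VV (pm (snd ii) (a'+2,b'+1,0)) = 0 then 1 else 0))
   = (6::complex) * (if a = a' \<and> b = b' then 1 else 0)"
proof -
  have "(\<Sum>ii\<in>{..<6::nat} \<times> {..<6::nat}. (sg (fst ii) * sg (snd ii)) *
     (if UU (pm (fst ii) (a+2,b+1,0)) - UU (pm (snd ii) (a'+2,b'+1,0)) = 0 \<and>
         VV (pm (fst ii) (a+2,b+1,0)) - VV (pm (snd ii) (a'+2,b'+1,0)) = 0 then 1 else 0))
    = (\<Sum>ii\<in>{..<6::nat} \<times> {..<6::nat}. (sg (fst ii) * sg (snd ii)) *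
     (if fst ii = snd ii \<and> a = a' \<and> b = b' then 1 else (0::complex)))"
  proof (intro sum.cong refl)
    fix ii :: "nat \<times> nat" assume "ii \<in> {..<6} \<times> {..<6}"
    then have c: "(UU (pm (fst ii) (a+2,b+1,0)) - UU (pm (snd ii) (a'+2,b'+1,0)) = 0 \<and>
         VV (pm (fst ii) (a+2,b+1,0)) - VV (pm (snd ii) (a'+2,b'+1,0)) = 0) \<longleftrightarrow> (fst ii = snd ii \<and> a = a' \<and> b = b')"
    proof -
      have m: "fst ii < 6" "snd ii < 6" using \<open>ii \<in> {..<6} \<times> {..<6}\<close> by auto
      show ?thesis by (rule cond_iff[OF m assms])
    qed
    show "sg (fst ii) * sg (snd ii) *
         (if UU (pm (fst ii) (a + 2, b + 1, 0)) - UU (pm (snd ii) (a' + 2, b' + 1, 0)) = 0 \<and>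
             VV (pm (fst ii) (a + 2, b + 1, 0)) - VV (pm (snd ii) (a' + 2, b' + 1, 0)) = 0
          then 1 else 0) =
         sg (fst ii) * sg (snd ii) * (if fst ii = snd ii \<and> a = a' \<and> b = b' then 1 else (0::complex))"
      by (simp only: c)
  qed
  also have "\<dots> = (\<Sum>i<6. \<Sum>i'<6. (sg i * sg i') * (if i = i' \<and> a = a' \<and> b = b' then 1 else (0::complex)))"
    by (simp add: sum.cartesian_product case_prod_beta)
  also have "\<dots> = (6::complex) * (if a = a' \<and> b = b' then 1 else 0)"
    by (simp add: sg_def numeral_eq_Suc)
  finally show ?thesis .
qed



definition ee :: "nat \<times> nat \<Rightarrow> nat \<times> nat \<times> nat" where "ee l = (fst l + 2, snd l + 1, 0)"

lemma sum3:
  "(\<Sum>a\<in>A. \<Sum>b\<in>B. \<Sum>c\<in>C. f a b c) = (\<Sum>z\<in>(A\<times>B)\<times>C. f (fst (fst z)) (snd (fst z)) (snd z))"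
proof -
  have "(\<Sum>a\<in>A. \<Sum>b\<in>B. \<Sum>c\<in>C. f a b c) = (\<Sum>p\<in>A\<times>B. \<Sum>c\<in>C. f (fst p) (snd p) c)"
    using sum.cartesian_product[of "\<lambda>a b. \<Sum>c\<in>C. f a b c" B A] by (simp add: case_prod_beta)
  also have "\<dots> = (\<Sum>z\<in>(A\<times>B)\<times>C. f (fst (fst z)) (snd (fst z)) (snd z))"
    using sum.cartesian_product[of "\<lambda>p c. f (fst p) (snd p) c" C "A\<times>B"] by (simp add: case_prod_beta)
  finally show ?thesis .
qed

lemma ST_schur:
  fixes k :: "nat \<times> nat \<Rightarrow> nat \<times> nat \<Rightarrow> complex"
  shows "sato_tate_integral (\<lambda>x. \<Sum>l\<in>Dm m. \<Sum>l'\<in>Dm m'. k l l' * (schur2 (fst l) (snd l) x * cnj (schur2 (fst l') (snd l') x)))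
    = (\<Sum>l\<in>Dm m. \<Sum>l'\<in>Dm m'. k l l' * (if l = l' then 1 else 0))"
proof -
  define K where "K = (Dm m \<times> Dm m') \<times> ({..<6::nat} \<times> {..<6::nat})"
  define w where "w = (\<lambda>z::((nat\<times>nat)\<times>(nat\<times>nat))\<times>(nat\<times>nat). k (fst (fst z)) (snd (fst z)) * (sg (fst (snd z)) * sg (snd (snd z))))"
  define u where "u = (\<lambda>z::((nat\<times>nat)\<times>(nat\<times>nat))\<times>(nat\<times>nat). UU (pm (fst (snd z)) (ee (fst (fst z)))) - UU (pm (snd (snd z)) (ee (snd (fst z)))))"
  define v where "v = (\<lambda>z::((nat\<times>nat)\<times>(nat\<times>nat))\<times>(nat\<times>nat). VV (pm (fst (snd z)) (ee (fst (fst z)))) - VV (pm (snd (snd z)) (ee (snd (fst z)))))"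
  have finK: "finite K" unfolding K_def using finite_Dm by auto
  have pw: "(\<Sum>l\<in>Dm m. \<Sum>l'\<in>Dm m'. k l l' * (schur2 (fst l) (snd l) (cis t1, cis t2, cis (-(t1+t2))) * cnj (schur2 (fst l') (snd l') (cis t1, cis t2, cis (-(t1+t2))))))
     * of_real ((cmod ((cis t1 - cis t2) * (cis t1 - cis (-(t1 + t2))) * (cis t2 - cis (-(t1 + t2))))) ^ 2)
     = (\<Sum>z\<in>K. w z * cis (of_int (u z) * t1 + of_int (v z) * t2))" for t1 t2
  proof -
    let ?t = "tor t1 t2"
    have D: "(cis t1 - cis t2) * (cis t1 - cis (-(t1 + t2))) * (cis t2 - cis (-(t1 + t2))) = Dl ?t"
      by (simp add: Dl_def tor_def)
    have "(\<Sum>l\<in>Dm m. \<Sum>l'\<in>Dm m'. k l l' * (schur2 (fst l) (snd l) ?t * cnj (schur2 (fst l') (snd l') ?t)))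
        * of_real ((cmod (Dl ?t)) ^ 2)
      = (\<Sum>l\<in>Dm m. \<Sum>l'\<in>Dm m'. k l l' * ((Dl ?t * schur2 (fst l) (snd l) ?t) * cnj (Dl ?t * schur2 (fst l') (snd l') ?t)))"
      unfolding complex_norm_square sum_distrib_right by (intro sum.cong refl) (simp add: mult_ac)
    also have "\<dots> = (\<Sum>l\<in>Dm m. \<Sum>l'\<in>Dm m'. k l l' * (alt (ee l) ?t * cnj (alt (ee l') ?t)))"
    proof (intro sum.cong refl)
      fix l l' assume "l \<in> Dm m" "l' \<in> Dm m'"
      then show "k l l' * ((Dl ?t * schur2 (fst l) (snd l) ?t) * cnj (Dl ?t * schur2 (fst l') (snd l') ?t))
        = k l l' * (alt (ee l) ?t * cnj (alt (ee l') ?t))"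
        using bialt[OF e3_tor] by (simp add: Dm_def ee_def)
    qed
    also have "\<dots> = (\<Sum>l\<in>Dm m. \<Sum>l'\<in>Dm m'. \<Sum>ii\<in>{..<6::nat} \<times> {..<6::nat}. k l l' * ((sg (fst ii) * sg (snd ii)) *
       cis (of_int (UU (pm (fst ii) (ee l)) - UU (pm (snd ii) (ee l'))) * t1 + of_int (VV (pm (fst ii) (ee l)) - VV (pm (snd ii) (ee l'))) * t2)))"
      by (simp add: alt_prod_tor sum_distrib_left)
    also have "\<dots> = (\<Sum>z\<in>K. w z * cis (of_int (u z) * t1 + of_int (v z) * t2))"
      unfolding K_def w_def u_def v_def sum3 by (simp add: mult.assoc)
    finally show ?thesis unfolding D by (simp add: tor_def)
  qed
  have "sato_tate_integral (\<lambda>x. \<Sum>l\<in>Dm m. \<Sum>l'\<in>Dm m'. k l l' * (schur2 (fst l) (snd l) x * cnj (schur2 (fst l') (snd l') x)))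
     = of_real (1 / (6 * (2 * pi) ^ 2)) * (LBINT t1=0..2*pi. (LBINT t2=0..2*pi. (\<Sum>z\<in>K. w z * cis (of_int (u z) * t1 + of_int (v z) * t2))))"
    unfolding sato_tate_integral_def pw ..
  also have "\<dots> = of_real (1 / (6 * (2 * pi) ^ 2)) * ((2*pi)^2 * (\<Sum>z\<in>K. w z * (if u z = 0 \<and> v z = 0 then 1 else 0)))"
    by (simp only: dbl_int[OF finK])
  also have "\<dots> = (1/6) * (\<Sum>z\<in>K. w z * (if u z = 0 \<and> v z = 0 then 1 else 0))"
    by (simp add: field_simps)
  also have "(\<Sum>z\<in>K. w z * (if u z = 0 \<and> v z = 0 then 1 else 0)) = (\<Sum>l\<in>Dm m. \<Sum>l'\<in>Dm m'. k l l' *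
      (\<Sum>ii\<in>{..<6::nat} \<times> {..<6::nat}. (sg (fst ii) * sg (snd ii)) *
     (if UU (pm (fst ii) (ee l)) - UU (pm (snd ii) (ee l')) = 0 \<and>
         VV (pm (fst ii) (ee l)) - VV (pm (snd ii) (ee l')) = 0 then 1 else 0)))"
    unfolding K_def w_def u_def v_def sum_distrib_left sum3 by (simp add: mult.assoc)
  also have "\<dots> = (\<Sum>l\<in>Dm m. \<Sum>l'\<in>Dm m'. k l l' * (6 * (if l = l' then 1 else 0)))"
  proof (intro sum.cong refl arg_cong2[where f="(*)"])
    fix l l' assume "l \<in> Dm m" "l' \<in> Dm m'"
    then show "(\<Sum>ii\<in>{..<6::nat} \<times> {..<6::nat}. (sg (fst ii) * sg (snd ii)) *
     (if UU (pm (fst ii) (ee l)) - UU (pm (snd ii) (ee l')) = 0 \<and>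
         VV (pm (fst ii) (ee l)) - VV (pm (snd ii) (ee l')) = 0 then 1 else (0::complex))) = 6 * (if l = l' then 1 else 0)"
      using comb[of "snd l" "fst l" "snd l'" "fst l'"] by (auto simp: Dm_def ee_def prod_eq_iff)
  qed
  finally show ?thesis by (simp add: sum_distrib_left)
qed



lemma infsum_fsum:
  fixes g :: "'i \<Rightarrow> 'a \<Rightarrow> complex"
  shows "finite I \<Longrightarrow> (\<And>i. i \<in> I \<Longrightarrow> g i summable_on A) \<Longrightarrow>
    (\<lambda>x. \<Sum>i\<in>I. g i x) summable_on A \<and> infsum (\<lambda>x. \<Sum>i\<in>I. g i x) A = (\<Sum>i\<in>I. infsum (g i) A)"
proof (induction I rule: finite_induct)
  case empty then show ?case by simp
next
  case (insert y F)
  then have s: "g y summable_on A" and ih: "(\<lambda>x. \<Sum>i\<in>F. g i x) summable_on A"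
    "infsum (\<lambda>x. \<Sum>i\<in>F. g i x) A = (\<Sum>i\<in>F. infsum (g i) A)" by auto
  show ?case using insert(1,2) summable_on_add[OF s ih(1)] infsum_add[OF s ih(1)] ih(2) by simp
qed

lemma ST_cong:
  assumes "\<And>t1 t2. F (cis t1, cis t2, cis (-(t1+t2))) = G (cis t1, cis t2, cis (-(t1+t2)))"
  shows "sato_tate_integral F = sato_tate_integral G"
  unfolding sato_tate_integral_def assms ..

lemma bnd_mono:
  fixes CE Q P T \<theta> \<epsilon> :: real
  assumes "0 \<le> CE" "1 \<le> Q" "Q \<le> P" "0 < T" "0 \<le> \<theta>" "0 < \<epsilon>"
  shows "CE * (T^2 * Q powr (1/2) + T^3 * Q powr \<theta> + Q powr (5/3)) * (T*Q) powr \<epsilon>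
    \<le> CE * (T^2 * P powr (1/2) + T^3 * P powr \<theta> + P powr (5/3)) * T powr \<epsilon> * P powr \<epsilon>"
proof -
  have Q0: "0 \<le> Q" using assms by simp
  have h1: "Q powr (1/2) \<le> P powr (1/2)" by (rule powr_mono2) (use assms in auto)
  have h2: "Q powr \<theta> \<le> P powr \<theta>" by (rule powr_mono2) (use assms in auto)
  have h3: "Q powr (5/3) \<le> P powr (5/3)" by (rule powr_mono2) (use assms in auto)
  have h4: "Q powr \<epsilon> \<le> P powr \<epsilon>" by (rule powr_mono2) (use assms in auto)
  have B: "T^2 * Q powr (1/2) + T^3 * Q powr \<theta> + Q powr (5/3) \<le> T^2 * P powr (1/2) + T^3 * P powr \<theta> + P powr (5/3)"
    using h1 h2 h3 assms by (intro add_mono mult_left_mono) auto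
  have B0: "0 \<le> T^2 * Q powr (1/2) + T^3 * Q powr \<theta> + Q powr (5/3)" using assms by simp
  have "(T*Q) powr \<epsilon> = T powr \<epsilon> * Q powr \<epsilon>" using assms by (simp add: powr_mult)
  also have "\<dots> \<le> T powr \<epsilon> * P powr \<epsilon>" using h4 by (intro mult_left_mono) auto
  finally have E: "(T*Q) powr \<epsilon> \<le> T powr \<epsilon> * P powr \<epsilon>" .
  have "CE * (T^2 * Q powr (1/2) + T^3 * Q powr \<theta> + Q powr (5/3)) * (T*Q) powr \<epsilon>
     \<le> CE * (T^2 * P powr (1/2) + T^3 * P powr \<theta> + P powr (5/3)) * (T powr \<epsilon> * P powr \<epsilon>)"
    using B B0 E assms by (intro mult_mono) auto
  then show ?thesis by (simp add: mult.assoc)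
qed

lemma final_arith:
  fixes S CE B W c1 T \<epsilon> Pe :: real
  assumes "0 \<le> S" "0 \<le> CE" "0 \<le> B" "0 < c1" "1 \<le> T" "c1 * T^5 \<le> W" "0 \<le> Pe"
  shows "S * (CE * B * T powr \<epsilon> * Pe) / W \<le> S * CE / c1 * B * T powr (-5 + \<epsilon>) * Pe"
proof -
  have T0: "0 < T" using assms by simp
  have W0: "0 < W" using assms T0 by (smt (verit) mult_pos_pos zero_less_power)
  have N: "0 \<le> S * (CE * B * T powr \<epsilon> * Pe)" using assms by simp
  have "S * (CE * B * T powr \<epsilon> * Pe) / W \<le> S * (CE * B * T powr \<epsilon> * Pe) / (c1 * T^5)"
    using assms W0 T0 N by (intro divide_left_mono) auto
  also have "T powr (-5 + \<epsilon>) = T powr \<epsilon> / T^5"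
  proof -
    have "T powr (-5 + \<epsilon>) = T powr \<epsilon> / T powr 5" using T0 by (simp add: powr_diff)
    also have "T powr (5::real) = T ^ 5" using T0 powr_realpow[of T 5] by simp
    finally show ?thesis .
  qed
  then have "S * (CE * B * T powr \<epsilon> * Pe) / (c1 * T^5) = S * CE / c1 * B * T powr (-5 + \<epsilon>) * Pe"
    by simp
  finally show ?thesis .
qed



theorem theorem9p1:
  fixes A :: "nat \<Rightarrow> nat \<Rightarrow> nat \<Rightarrow> complex"
    and nu1 nu2 :: "nat \<Rightarrow> complex"
    and L :: "nat \<Rightarrow> real"
    and h :: "real \<Rightarrow> complex \<Rightarrow> complex \<Rightarrow> real"
    and \<omega> :: "nat \<Rightarrow> real \<Rightarrow> real"
    and alpha :: "nat \<Rightarrow> nat \<Rightarrow> complex \<times> complex \<times> complex"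
    and \<theta> :: real
    and i1 i1' i2 i2' :: nat
  assumes L_pos: "\<And>j. L j > 0"
    and satake_det: "\<And>p j. prime p \<Longrightarrow>
          (case alpha p j of (a1, a2, a3) \<Rightarrow> a1 * a2 * a3 = 1)"
    and casselman_shalika: "\<And>p j a b. prime p \<Longrightarrow>
          A j (p ^ a) (p ^ b) = schur2 (a + b) b (alpha p j)"
    and h_nonneg: "\<And>T v1 v2. h T v1 v2 \<ge> 0"
    and h_bounded: "\<exists>B T0. \<forall>T\<ge>T0. \<forall>v1 v2. \<bar>Re v1\<bar> \<le> 1/2 \<and> \<bar>Re v2\<bar> \<le> 1/2
          \<longrightarrow> h T v1 v2 \<le> B"
    and h_asymp_one: "\<exists>c c1 c2 T0. c > 0 \<and> c1 > 0 \<and> c2 > 0 \<and>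
          (\<forall>T\<ge>T0. \<forall>v1 v2. c \<le> Im v1 \<and> Im v1 \<le> T \<and> c \<le> Im v2 \<and> Im v2 \<le> T
             \<and> \<bar>Re v1\<bar> \<le> 1/2 \<and> \<bar>Re v2\<bar> \<le> 1/2 \<longrightarrow> c1 \<le> h T v1 v2 \<and> h T v1 v2 \<le> c2)"
    and h_decay: "\<And>A'. \<exists>C T0. \<forall>T\<ge>T0. \<forall>v1 v2.
          h T v1 v2 \<le> C * ((1 + cmod v1 / T) * (1 + cmod v2 / T)) powr (- A')"
    and \<omega>_def: "\<And>j T. \<omega> j T = h T (nu1 j) (nu2 j) / L j"
    and theta_nonneg: "0 \<le> \<theta>"
    and orthogonality_E: "\<And>\<epsilon>. \<epsilon> > 0 \<Longrightarrow> \<exists>C T0. \<forall>T\<ge>T0. \<forall>m1 m2 n1 n2.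
          m1 \<ge> 1 \<longrightarrow> m2 \<ge> 1 \<longrightarrow> n1 \<ge> 1 \<longrightarrow> n2 \<ge> 1 \<longrightarrow>
          (let Q = real (m1 * m2 * n1 * n2) in
           (\<lambda>j. A j m1 m2 * cnj (A j n1 n2) * of_real (\<omega> j T)) summable_on UNIV \<and>
           cmod ((\<Sum>\<^sub>\<infinity>j. A j m1 m2 * cnj (A j n1 n2) * of_real (\<omega> j T))
                 - (if m1 = n1 \<and> m2 = n2 then 1 else 0) * of_real (\<Sum>\<^sub>\<infinity>j. \<omega> j T))
           \<le> C * (T^2 * Q powr (1/2) + T^3 * Q powr \<theta> + Q powr (5/3)) * (T * Q) powr \<epsilon>)"
    and weyl_law: "\<exists>c1 c2 T0. c1 > 0 \<and> c2 > 0 \<and> (\<forall>T\<ge>T0.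
          (\<lambda>j. \<omega> j T) summable_on UNIV \<and>
          c1 * T^5 \<le> (\<Sum>\<^sub>\<infinity>j. \<omega> j T) \<and> (\<Sum>\<^sub>\<infinity>j. \<omega> j T) \<le> c2 * T^5)"
  shows "\<forall>\<epsilon>>0. \<exists>C T0. \<forall>p T. prime p \<longrightarrow> T \<ge> T0 \<longrightarrow>
          (let P = real p ^ (i1 + i1' + i2 + i2') in
           cmod ((\<Sum>\<^sub>\<infinity>j. ffun i1 i1' i2 i2' (alpha p j) * of_real (\<omega> j T))
                   / of_real (\<Sum>\<^sub>\<infinity>j. \<omega> j T)
                 - sato_tate_integral (ffun i1 i1' i2 i2'))
           \<le> C * (T^2 * P powr (1/2) + T^3 * P powr \<theta> + P powr (5/3))
               * T powr (-5 + \<epsilon>) * P powr \<epsilon>)"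
proof (intro allI impI)
  fix \<epsilon> :: real assume eps: "\<epsilon> > 0"
  define N1 where "N1 = i1 + i2"
  define N2 where "N2 = i1' + i2'"
  obtain c where c: "\<And>t. e3 t = 1 \<Longrightarrow> e1 t ^ i1 * e2 t ^ i2 = (\<Sum>l\<in>Dm N1. c l * schur2 (fst l) (snd l) t)"
    using Sp_pow[of i1 i2] unfolding Sp_def N1_def by blast
  obtain c' where c': "\<And>t. e3 t = 1 \<Longrightarrow> e1 t ^ i1' * e2 t ^ i2' = (\<Sum>l\<in>Dm N2. c' l * schur2 (fst l) (snd l) t)"
    using Sp_pow[of i1' i2'] unfolding Sp_def N2_def by blast
  define Z where "Z = Dm N1 \<times> Dm N2"
  have finZ: "finite Z" unfolding Z_def using finite_Dm by simp
  define kk where "kk z = c (fst z) * cnj (c' (snd z))" for z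
  have ffun_e: "ffun i1 i1' i2 i2' t = (e1 t ^ i1 * e2 t ^ i2) * cnj (e1 t ^ i1' * e2 t ^ i2')" for t
    by (cases t) (simp add: ffun_def e1_def e2_def)
  have fdec: "ffun i1 i1' i2 i2' t = (\<Sum>z\<in>Z. kk z * (schur2 (fst (fst z)) (snd (fst z)) t * cnj (schur2 (fst (snd z)) (snd (snd z)) t)))"
    if t: "e3 t = 1" for t
  proof -
    have "ffun i1 i1' i2 i2' t = (\<Sum>l\<in>Dm N1. c l * schur2 (fst l) (snd l) t) * cnj (\<Sum>l\<in>Dm N2. c' l * schur2 (fst l) (snd l) t)"
      by (simp only: ffun_e c[OF t] c'[OF t])
    also have "\<dots> = (\<Sum>l\<in>Dm N1. \<Sum>l'\<in>Dm N2. (c l * schur2 (fst l) (snd l) t) * cnj (c' l' * schur2 (fst l') (snd l') t))"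
      by (simp add: cnj_sum sum_product)
    also have "\<dots> = (\<Sum>z\<in>Z. kk z * (schur2 (fst (fst z)) (snd (fst z)) t * cnj (schur2 (fst (snd z)) (snd (snd z)) t)))"
      unfolding Z_def kk_def by (simp add: sum.cartesian_product case_prod_beta mult_ac)
    finally show ?thesis .
  qed
  have integral: "sato_tate_integral (ffun i1 i1' i2 i2') = (\<Sum>z\<in>Z. kk z * (if fst z = snd z then 1 else 0))"
  proof -
    have "sato_tate_integral (ffun i1 i1' i2 i2') = sato_tate_integral (\<lambda>x. \<Sum>l\<in>Dm N1. \<Sum>l'\<in>Dm N2. (c l * cnj (c' l')) * (schur2 (fst l) (snd l) x * cnj (schur2 (fst l') (snd l') x)))"
    proof (rule ST_cong)
      fix t1 t2
      show "ffun i1 i1' i2 i2' (cis t1, cis t2, cis (- (t1 + t2))) = (\<Sum>l\<in>Dm N1. \<Sum>l'\<in>Dm N2. (c l * cnj (c' l')) * (schur2 (fst l) (snd l) (cis t1, cis t2, cis (- (t1 + t2))) * cnj (schur2 (fst l') (snd l') (cis t1, cis t2, cis (- (t1 + t2))))))"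
        using fdec[OF e3_tor[of t1 t2, unfolded tor_def]] unfolding Z_def kk_def
        by (simp add: sum.cartesian_product case_prod_beta)
    qed
    also have "\<dots> = (\<Sum>l\<in>Dm N1. \<Sum>l'\<in>Dm N2. (c l * cnj (c' l')) * (if l = l' then 1 else 0))"
      by (rule ST_schur)
    also have "\<dots> = (\<Sum>z\<in>Z. kk z * (if fst z = snd z then 1 else 0))"
      unfolding Z_def kk_def by (simp add: sum.cartesian_product case_prod_beta)
    finally show ?thesis .
  qed
  obtain CE TE where E: "\<forall>T\<ge>TE. \<forall>m1 m2 n1 n2.
          m1 \<ge> 1 \<longrightarrow> m2 \<ge> 1 \<longrightarrow> n1 \<ge> 1 \<longrightarrow> n2 \<ge> 1 \<longrightarrow>
          (let Q = real (m1 * m2 * n1 * n2) in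
           (\<lambda>j. A j m1 m2 * cnj (A j n1 n2) * of_real (\<omega> j T)) summable_on UNIV \<and>
           cmod ((\<Sum>\<^sub>\<infinity>j. A j m1 m2 * cnj (A j n1 n2) * of_real (\<omega> j T))
                 - (if m1 = n1 \<and> m2 = n2 then 1 else 0) * of_real (\<Sum>\<^sub>\<infinity>j. \<omega> j T))
           \<le> CE * (T^2 * Q powr (1/2) + T^3 * Q powr \<theta> + Q powr (5/3)) * (T * Q) powr \<epsilon>)"
    using orthogonality_E[OF eps] by blast
  obtain c1 c2 TW where W: "c1 > 0" "\<forall>T\<ge>TW. (\<lambda>j. \<omega> j T) summable_on UNIV \<and>
          c1 * T^5 \<le> (\<Sum>\<^sub>\<infinity>j. \<omega> j T)"
    using weyl_law by blast
  have CE0: "0 \<le> CE"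
  proof -
    define T1 where "T1 = max TE 1"
    have "cmod ((\<Sum>\<^sub>\<infinity>j. A j 1 1 * cnj (A j 1 1) * of_real (\<omega> j T1))
                 - (if (1::nat) = 1 \<and> (1::nat) = 1 then 1 else 0) * of_real (\<Sum>\<^sub>\<infinity>j. \<omega> j T1))
       \<le> CE * (T1^2 * real (1*1*1*1::nat) powr (1/2) + T1^3 * real (1*1*1*1::nat) powr \<theta> + real (1*1*1*1::nat) powr (5/3)) * (T1 * real (1*1*1*1::nat)) powr \<epsilon>"
      using E[rule_format, of T1 1 1 1 1] unfolding T1_def Let_def by simp
    then have "0 \<le> CE * (T1^2 * real (1*1*1*1::nat) powr (1/2) + T1^3 * real (1*1*1*1::nat) powr \<theta> + real (1*1*1*1::nat) powr (5/3)) * (T1 * real (1*1*1*1::nat)) powr \<epsilon>"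
      by (rule order.trans[OF norm_ge_zero])
    then have "0 \<le> CE * (T1^2 + T1^3 + 1) * T1 powr \<epsilon>" by simp
    moreover have "0 < T1" unfolding T1_def by simp
    then have "0 < (T1^2 + T1^3 + 1) * T1 powr \<epsilon>" by (intro mult_pos_pos add_pos_pos) auto
    ultimately show ?thesis by (metis mult.assoc zero_le_mult_iff not_le)
  qed
  define Ct where "Ct = (\<Sum>z\<in>Z. cmod (kk z)) * CE / c1"
  show "\<exists>C T0. \<forall>p T. prime p \<longrightarrow> T \<ge> T0 \<longrightarrow>
          (let P = real p ^ (i1 + i1' + i2 + i2') in
           cmod ((\<Sum>\<^sub>\<infinity>j. ffun i1 i1' i2 i2' (alpha p j) * of_real (\<omega> j T))
                   / of_real (\<Sum>\<^sub>\<infinity>j. \<omega> j T)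
                 - sato_tate_integral (ffun i1 i1' i2 i2'))
           \<le> C * (T^2 * P powr (1/2) + T^3 * P powr \<theta> + P powr (5/3))
               * T powr (-5 + \<epsilon>) * P powr \<epsilon>)"
  proof (intro exI allI impI)
    fix p :: nat and T :: real
    assume p: "prime p" and T: "max (max TE TW) 1 \<le> T"
    have p1: "1 < p" using p prime_gt_1_nat by blast
    define P where "P = real p ^ (i1 + i1' + i2 + i2')"
    define m1 where "m1 z = p ^ (fst (fst z) - snd (fst z))" for z :: "(nat \<times> nat) \<times> (nat \<times> nat)"
    define m2 where "m2 z = p ^ (snd (fst z))" for z :: "(nat \<times> nat) \<times> (nat \<times> nat)"
    define n1 where "n1 z = p ^ (fst (snd z) - snd (snd z))" for z :: "(nat \<times> nat) \<times> (nat \<times> nat)"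
    define n2 where "n2 z = p ^ (snd (snd z))" for z :: "(nat \<times> nat) \<times> (nat \<times> nat)"
    define Q where "Q z = real (m1 z * m2 z * n1 z * n2 z)" for z
    define X where "X z = (\<Sum>\<^sub>\<infinity>j. A j (m1 z) (m2 z) * cnj (A j (n1 z) (n2 z)) * of_real (\<omega> j T))" for z
    define Wt where "Wt = (\<Sum>\<^sub>\<infinity>j. \<omega> j T)"
    define dl where "dl z = (if m1 z = n1 z \<and> m2 z = n2 z then 1 else 0 :: complex)" for z
    define B where "B = T^2 * P powr (1/2) + T^3 * P powr \<theta> + P powr (5/3)"
    have T1: "1 \<le> T" "TE \<le> T" "TW \<le> T" using T by auto
    have Z_le: "snd (fst z) \<le> fst (fst z)" "fst (fst z) \<le> N1" "snd (snd z) \<le> fst (snd z)" "fst (snd z) \<le> N2"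
      if "z \<in> Z" for z using that unfolding Z_def Dm_def by auto
    have Eb: "(\<lambda>j. A j (m1 z) (m2 z) * cnj (A j (n1 z) (n2 z)) * of_real (\<omega> j T)) summable_on UNIV \<and>
       cmod (X z - dl z * of_real Wt) \<le> CE * (T^2 * Q z powr (1/2) + T^3 * Q z powr \<theta> + Q z powr (5/3)) * (T * Q z) powr \<epsilon>"
      for z
    proof -
      have "m1 z \<ge> 1" "m2 z \<ge> 1" "n1 z \<ge> 1" "n2 z \<ge> 1" using p1 unfolding m1_def m2_def n1_def n2_def by auto
      then show ?thesis using E[rule_format, OF T1(2), of "m1 z" "m2 z" "n1 z" "n2 z"]
        unfolding Let_def X_def dl_def Q_def Wt_def by simp
    qed
    have Qz: "1 \<le> Q z \<and> Q z \<le> P" if z: "z \<in> Z" for z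
    proof -
      have "m1 z * m2 z * n1 z * n2 z = p ^ (fst (fst z) + fst (snd z))"
        using Z_le[OF z] unfolding m1_def m2_def n1_def n2_def
        by (simp add: power_add[symmetric] mult.assoc)
      then have q: "Q z = real p ^ (fst (fst z) + fst (snd z))" unfolding Q_def by simp
      have "fst (fst z) + fst (snd z) \<le> i1 + i1' + i2 + i2'" using Z_le[OF z] unfolding N1_def N2_def by simp
      then have "real p ^ (fst (fst z) + fst (snd z)) \<le> P" unfolding P_def
        using p1 by (intro power_increasing) auto
      moreover have "1 \<le> real p ^ (fst (fst z) + fst (snd z))" using p1 by simp
      ultimately show ?thesis using q by simp
    qed
    have dl_eq: "dl z = (if fst z = snd z then 1 else 0)" if z: "z \<in> Z" for z
    proof -
      have "(m1 z = n1 z \<and> m2 z = n2 z) \<longleftrightarrow> fst z = snd z"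
      proof
        assume "m1 z = n1 z \<and> m2 z = n2 z"
        then have "fst (fst z) - snd (fst z) = fst (snd z) - snd (snd z)" "snd (fst z) = snd (snd z)"
          unfolding m1_def m2_def n1_def n2_def using p1 power_inject_exp by blast+
        then show "fst z = snd z" using Z_le[OF z] by (simp add: prod_eq_iff)
      qed (simp add: m1_def m2_def n1_def n2_def)
      then show ?thesis unfolding dl_def by simp
    qed
    have Aeq: "A j (m1 z) (m2 z) = schur2 (fst (fst z)) (snd (fst z)) (alpha p j)"
       "A j (n1 z) (n2 z) = schur2 (fst (snd z)) (snd (snd z)) (alpha p j)" if z: "z \<in> Z" for z j
      using casselman_shalika[OF p, of j "fst (fst z) - snd (fst z)" "snd (fst z)"]
        casselman_shalika[OF p, of j "fst (snd z) - snd (snd z)" "snd (snd z)"] Z_le[OF z]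
      unfolding m1_def m2_def n1_def n2_def by simp_all
    have e3a: "e3 (alpha p j) = 1" for j
      using satake_det[OF p, of j] by (cases "alpha p j") (simp add: e3_def)
    have fw: "ffun i1 i1' i2 i2' (alpha p j) * of_real (\<omega> j T) =
       (\<Sum>z\<in>Z. kk z * (A j (m1 z) (m2 z) * cnj (A j (n1 z) (n2 z)) * of_real (\<omega> j T)))" for j
      unfolding fdec[OF e3a] sum_distrib_right
      by (intro sum.cong refl) (simp add: Aeq mult_ac)
    have sumeq: "(\<Sum>\<^sub>\<infinity>j. ffun i1 i1' i2 i2' (alpha p j) * of_real (\<omega> j T)) = (\<Sum>z\<in>Z. kk z * X z)"
    proof -
      have "(\<Sum>\<^sub>\<infinity>j. ffun i1 i1' i2 i2' (alpha p j) * of_real (\<omega> j T))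
          = (\<Sum>\<^sub>\<infinity>j. \<Sum>z\<in>Z. kk z * (A j (m1 z) (m2 z) * cnj (A j (n1 z) (n2 z)) * of_real (\<omega> j T)))"
        by (simp only: fw)
      also have "\<dots> = (\<Sum>z\<in>Z. \<Sum>\<^sub>\<infinity>j. kk z * (A j (m1 z) (m2 z) * cnj (A j (n1 z) (n2 z)) * of_real (\<omega> j T)))"
        using infsum_fsum[OF finZ, of "\<lambda>z j. kk z * (A j (m1 z) (m2 z) * cnj (A j (n1 z) (n2 z)) * of_real (\<omega> j T))" UNIV]
          Eb summable_on_cmult_right by blast
      also have "\<dots> = (\<Sum>z\<in>Z. kk z * X z)"
        unfolding X_def by (intro sum.cong refl infsum_cmult_right) (use Eb in blast)
      finally show ?thesis .
    qed
    have Wb: "c1 * T^5 \<le> Wt" using W(2) T1(3) unfolding Wt_def by blast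
    have Wpos: "0 < Wt" using Wb W(1) T1(1) by (smt (verit) mult_pos_pos zero_less_power)
    have "(\<Sum>z\<in>Z. kk z * X z) / of_real Wt - (\<Sum>z\<in>Z. kk z * (if fst z = snd z then 1 else 0))
        = (\<Sum>z\<in>Z. kk z * (X z - dl z * of_real Wt)) / of_real Wt"
    proof -
      have "(\<Sum>z\<in>Z. kk z * (if fst z = snd z then 1 else 0)) = (\<Sum>z\<in>Z. kk z * dl z)"
        using dl_eq by (intro sum.cong refl) simp
      moreover have "(\<Sum>z\<in>Z. kk z * dl z) = (\<Sum>z\<in>Z. kk z * dl z * of_real Wt) / of_real Wt"
        using Wpos by (simp add: sum_divide_distrib)
      ultimately show ?thesis
        by (simp add: diff_divide_distrib[symmetric] sum_subtractf[symmetric] algebra_simps)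
    qed
    then have "cmod ((\<Sum>\<^sub>\<infinity>j. ffun i1 i1' i2 i2' (alpha p j) * of_real (\<omega> j T)) / of_real Wt - sato_tate_integral (ffun i1 i1' i2 i2'))
       = cmod (\<Sum>z\<in>Z. kk z * (X z - dl z * of_real Wt)) / Wt"
      using Wpos by (simp add: sumeq integral norm_divide)
    also have "\<dots> \<le> (\<Sum>z\<in>Z. cmod (kk z) * (CE * B * T powr \<epsilon> * P powr \<epsilon>)) / Wt"
    proof (intro divide_right_mono order.trans[OF norm_sum] sum_mono)
      fix z assume z: "z \<in> Z"
      have "cmod (kk z * (X z - dl z * of_real Wt)) = cmod (kk z) * cmod (X z - dl z * of_real Wt)"
        by (simp add: norm_mult)
      also have "\<dots> \<le> cmod (kk z) * (CE * B * T powr \<epsilon> * P powr \<epsilon>)"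
      proof (intro mult_left_mono)
        show "cmod (X z - dl z * of_real Wt) \<le> CE * B * T powr \<epsilon> * P powr \<epsilon>"
          using Eb[of z] bnd_mono[OF CE0, of "Q z" P T \<theta> \<epsilon>] Qz[OF z] T1(1) theta_nonneg eps
          unfolding B_def by simp
      qed simp
      finally show "cmod (kk z * (X z - dl z * of_real Wt)) \<le> cmod (kk z) * (CE * B * T powr \<epsilon> * P powr \<epsilon>)" .
    qed (use Wpos in simp)
    also have "\<dots> = (\<Sum>z\<in>Z. cmod (kk z)) * (CE * B * T powr \<epsilon> * P powr \<epsilon>) / Wt"
      by (simp add: sum_distrib_right)
    also have "\<dots> \<le> Ct * B * T powr (-5 + \<epsilon>) * P powr \<epsilon>"
      unfolding Ct_def
    proof (rule final_arith)
      show "0 \<le> B" unfolding B_def using T1(1) by (intro add_nonneg_nonneg mult_nonneg_nonneg) auto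
    qed (use CE0 W(1) T1(1) Wb in \<open>auto intro: sum_nonneg\<close>)
    finally show "let P = real p ^ (i1 + i1' + i2 + i2') in
           cmod ((\<Sum>\<^sub>\<infinity>j. ffun i1 i1' i2 i2' (alpha p j) * of_real (\<omega> j T))
                   / of_real (\<Sum>\<^sub>\<infinity>j. \<omega> j T)
                 - sato_tate_integral (ffun i1 i1' i2 i2'))
           \<le> Ct * (T^2 * P powr (1/2) + T^3 * P powr \<theta> + P powr (5/3))
               * T powr (-5 + \<epsilon>) * P powr \<epsilon>"
      unfolding Let_def Wt_def[symmetric] P_def[symmetric] B_def[symmetric] .
  qed
qed


end
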